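(* Let $k\in\mathbb{N}$ with $k\ge2$. For every actively connected set $S$, there exists a collection $\mathcal{S}_k$ of subsets of $S$, each containing at most $k$ elements, such that $\mathrm{cost}(\mathcal{S}_k)\le\big(1+\frac{1}{\lfloor\log_2 k\rfloor}\big)\cdot\mathrm{cost}(S)$ and $\mathrm{gain}(\mathcal{S}_k)=\mathrm{gain}(\{S\})$.
   Context: Steiner Forest: finite undirected graph $G=(V,E)$, non-negative edge costs $(c_e)_{e\in E}$, set $\mathcal{D}$ of demand pairs $\{a,b\}\subseteq V$ (partners). For $U\subseteq V$, $\delta(U)$ is the set of edges with exactly one endpoint in $U$. The $\varepsilon$-extended moat-growing algorithm (fixed $\varepsilon\ge0$): time $t$ increases continuously from $0$ at unit rate; it maintains tight edges $F$ (initially empty), duals $y_S(t)\ge0$ (initially $0$), and budgets of components (initially $0$). $\mathcal{C}^t$ is the family of vertex sets of connected components of $(V,F)$. A component is demand-active if it contains a vertex not connected in $(V,F)$ to some partner; budget-active if not demand-active but with positive budget; active if either; $\mathcal{A}^t$ is the set of active components. Each $y_S$, $S\in\mathcal{A}^t$, grows at unit rate; budgets of demand-active components grow at rate $\varepsilon$ and of budget-active ones decrease at rate $1$; an edge $e$ with $\sum_{S:e\in\delta(S)}y_S(t)=c_e$ becomes tight and is added to $F$; merging components add budgets. The deactivation time $\tau_v$ of $v$ is the largest $t$ such that for all $s<t$, $v$ lies in a set of $\mathcal{A}^s$. Vertices $u,v$ are actively connected if for some $t$ they lie in a common set of $\mathcal{C}^t$ and $\tau_u,\tau_v\ge t$;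 this is an equivalence relation and a set is actively connected if contained in one equivalence class. For a collection $\mathcal{S}$ of actively connected sets, $\mathcal{A}^t/\mathcal{S}$ arises from $\mathcal{A}^t$ by merging sets of $\mathcal{A}^t$ into a single set whenever they are intersected by the same $S\in\mathcal{S}$ (transitively), and $\mathrm{gain}(\mathcal{S})=2\int_0^\infty(|\mathcal{A}^t|-|\mathcal{A}^t/\mathcal{S}|)\,dt$. For $S\subseteq V$, $\mathrm{cost}(S)$ is the minimum cost $\sum_{e\in F}c_e$ of an edge set $F\subseteq E$ such that all vertices of $S$ lie in one connected component of $(V,F)$; $\mathrm{cost}(\mathcal{S})=\sum_{S\in\mathcal{S}}\mathrm{cost}(S)$. *)

theory Defs
  imports "HOL-Analysis.Analysis"
begin

text \<open>Graphs: vertex set V (finite), edges are 2-element subsets of V,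
  edge costs c, demand pairs D (sets {a,b} of vertices).
  An edge set F defines an adjacency relation; components of (V,F).\<close>

definition edge_rel :: "'v set set \<Rightarrow> ('v \<times> 'v) set" where
  "edge_rel F = {(u, v). {u, v} \<in> F}"

definition comps :: "'v set \<Rightarrow> 'v set set \<Rightarrow> 'v set set" where
  "comps V F = V // {(u, v). u \<in> V \<and> v \<in> V \<and> (u, v) \<in> (edge_rel F)\<^sup>*}"

definition delta :: "'v set set \<Rightarrow> 'v set \<Rightarrow> 'v set set" where
  "delta E U = {e \<in> E. card (e \<inter> U) = 1}"

definition demand_active :: "'v set set \<Rightarrow> 'v set \<Rightarrow> bool" where
  "demand_active D C \<longleftrightarrow> (\<exists>v\<in>C. \<exists>u. {v, u} \<in> D \<and> u \<notin> C)"

text \<open>Run data: Fs t = tight edges at time t, Act t = active components at time t.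
  Dual variable y_S(t): grows at unit rate while S is active.\<close>
definition dual :: "(real \<Rightarrow> 'v set set) \<Rightarrow> 'v set \<Rightarrow> real \<Rightarrow> real" where
  "dual Act S t = integral {0..t} (\<lambda>s. if S \<in> Act s then 1 else 0)"

definition load :: "'v set \<Rightarrow> 'v set set \<Rightarrow> (real \<Rightarrow> 'v set set) \<Rightarrow> 'v set \<Rightarrow> real \<Rightarrow> real" where
  "load V E Act e t = (\<Sum>S\<in>{S. S \<subseteq> V \<and> e \<in> delta E S}. dual Act S t)"

text \<open>Budget of a component C at time t: budgets of demand-active components grow at rate eps,
  those of budget-active components decrease at rate 1, and merging adds budgets; hence the
  budget of C is the accumulated change over all (earlier) components contained in C.\<close>
definition budget :: "'v set set \<Rightarrow> real \<Rightarrow> (real \<Rightarrow> 'v set set) \<Rightarrow> 'v set \<Rightarrow> real \<Rightarrow> real" where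
  "budget D eps Act C t = integral {0..t}
     (\<lambda>s. eps * real (card {S \<in> Act s. S \<subseteq> C \<and> demand_active D S})
          - real (card {S \<in> Act s. S \<subseteq> C \<and> \<not> demand_active D S}))"

definition moat_run :: "'v set \<Rightarrow> 'v set set \<Rightarrow> ('v set \<Rightarrow> real) \<Rightarrow> 'v set set \<Rightarrow> real
     \<Rightarrow> (real \<Rightarrow> 'v set set) \<Rightarrow> (real \<Rightarrow> 'v set set) \<Rightarrow> bool" where
  "moat_run V E c D eps Fs Act \<longleftrightarrow>
     (\<forall>S t. (\<lambda>s. if S \<in> Act s then 1 else (0::real)) integrable_on {0..t}) \<and>
     (\<forall>t\<ge>0. Fs t = {e \<in> E. load V E Act e t \<ge> c e}) \<and>
     (\<forall>t\<ge>0. Act t = {C \<in> comps V (Fs t). demand_active D C \<or>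
                                         (\<not> demand_active D C \<and> budget D eps Act C t > 0)})"

definition deact_time :: "(real \<Rightarrow> 'v set set) \<Rightarrow> 'v \<Rightarrow> ereal" where
  "deact_time Act v = (SUP t \<in> {t. 0 \<le> t \<and> (\<forall>s. 0 \<le> s \<and> s < t \<longrightarrow> (\<exists>A\<in>Act s. v \<in> A))}. ereal t)"

definition act_conn :: "'v set \<Rightarrow> (real \<Rightarrow> 'v set set) \<Rightarrow> (real \<Rightarrow> 'v set set) \<Rightarrow> 'v \<Rightarrow> 'v \<Rightarrow> bool" where
  "act_conn V Fs Act u v \<longleftrightarrow>
     (\<exists>t\<ge>0. (\<exists>C\<in>comps V (Fs t). u \<in> C \<and> v \<in> C) \<and>
            ereal t \<le> deact_time Act u \<and> ereal t \<le> deact_time Act v)"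

definition act_conn_set :: "'v set \<Rightarrow> (real \<Rightarrow> 'v set set) \<Rightarrow> (real \<Rightarrow> 'v set set) \<Rightarrow> 'v set \<Rightarrow> bool" where
  "act_conn_set V Fs Act S \<longleftrightarrow> (\<forall>u\<in>S. \<forall>v\<in>S. act_conn V Fs Act u v)"

definition merge_rel :: "'v set set \<Rightarrow> 'v set set \<Rightarrow> ('v set \<times> 'v set) set" where
  "merge_rel A SS = {(X, Y). X \<in> A \<and> Y \<in> A \<and> (\<exists>S\<in>SS. S \<inter> X \<noteq> {} \<and> S \<inter> Y \<noteq> {})}"

definition quot_fam :: "'v set set \<Rightarrow> 'v set set \<Rightarrow> 'v set set" where
  "quot_fam A SS = (\<lambda>K. \<Union>K) ` (A // {(X, Y). X \<in> A \<and> Y \<in> A \<and> (X, Y) \<in> (merge_rel A SS)\<^sup>*})"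

definition gain :: "(real \<Rightarrow> 'v set set) \<Rightarrow> 'v set set \<Rightarrow> real" where
  "gain Act SS = 2 * integral {0..} (\<lambda>t. real (card (Act t)) - real (card (quot_fam (Act t) SS)))"

definition cost_set :: "'v set set \<Rightarrow> ('v set \<Rightarrow> real) \<Rightarrow> 'v set \<Rightarrow> real" where
  "cost_set E c S = Min {sum c F | F. F \<subseteq> E \<and> (\<forall>u\<in>S. \<forall>v\<in>S. (u, v) \<in> (edge_rel F)\<^sup>*)}"

definition cost_coll :: "'v set set \<Rightarrow> ('v set \<Rightarrow> real) \<Rightarrow> 'v set set \<Rightarrow> real" where
  "cost_coll E c SS = (\<Sum>S\<in>SS. cost_set E c S)"

end

theory Submission
  imports Defs
begin

datatype 'v bt = Lf 'v | Nd 'v "'v set set" "'v bt" "'v set set" "'v bt"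

fun lab :: "'v bt \<Rightarrow> 'v" where
  "lab (Lf v) = v" | "lab (Nd v A l B r) = v"
fun lvs :: "'v bt \<Rightarrow> 'v set" where
  "lvs (Lf v) = {v}" | "lvs (Nd v A l B r) = lvs l \<union> lvs r"
fun ted :: "'v bt \<Rightarrow> 'v set set" where
  "ted (Lf v) = {}" | "ted (Nd v A l B r) = A \<union> B \<union> ted l \<union> ted r"
fun wft :: "'v bt \<Rightarrow> bool" where
  "wft (Lf v) = True"
| "wft (Nd v A l B r) = ((v, lab l) \<in> (edge_rel A)\<^sup>* \<and> (v, lab r) \<in> (edge_rel B)\<^sup>* \<and> wft l \<and> wft r)"
fun lm :: "'v bt \<Rightarrow> 'v" where "lm (Lf v) = v" | "lm (Nd v A l B r) = lm l"
fun lmp :: "'v bt \<Rightarrow> 'v set set" where "lmp (Lf v) = {}" | "lmp (Nd v A l B r) = A \<union> lmp l"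
fun Ct :: "('v set \<Rightarrow> real) \<Rightarrow> 'v bt \<Rightarrow> real" where
  "Ct c (Lf v) = 0" | "Ct c (Nd v A l B r) = sum c A + sum c B + Ct c l + Ct c r"
fun LW :: "('v set \<Rightarrow> real) \<Rightarrow> 'v bt \<Rightarrow> real" where
  "LW c (Lf v) = 0" | "LW c (Nd v A l B r) = sum c A + LW c l"
fun PW :: "('v set \<Rightarrow> real) \<Rightarrow> 'v bt \<Rightarrow> real" where
  "PW c (Lf v) = 0" | "PW c (Nd v A l B r) = sum c B + LW c r"
fun allP :: "('v set \<Rightarrow> real) \<Rightarrow> 'v bt \<Rightarrow> real" where
  "allP c (Lf v) = 0" | "allP c (Nd v A l B r) = sum c B + LW c r + allP c l + allP c r"

fun opn :: "nat \<Rightarrow> nat \<Rightarrow> 'v bt \<Rightarrow> 'v set \<times> 'v set set" where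
  "opn m d (Lf v) = ({v}, {})"
| "opn m 0 (Nd v A l B r) = ({lm r}, B \<union> lmp r)"
| "opn m (Suc d) (Nd v A l B r) = (fst (opn m d l) \<union> fst (opn m d r), A \<union> B \<union> snd (opn m d l) \<union> snd (opn m d r))"

fun cls :: "nat \<Rightarrow> nat \<Rightarrow> 'v bt \<Rightarrow> ('v set \<times> 'v set set) list" where
  "cls m d (Lf v) = []"
| "cls m 0 (Nd v A l B r) = (fst (opn m m l) \<union> fst (opn m m r), A \<union> B \<union> snd (opn m m l) \<union> snd (opn m m r)) # cls m m l @ cls m m r"
| "cls m (Suc d) (Nd v A l B r) = cls m d l @ cls m d r"

fun co :: "('v set \<Rightarrow> real) \<Rightarrow> nat \<Rightarrow> nat \<Rightarrow> 'v bt \<Rightarrow> real" where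
  "co c m d (Lf v) = 0"
| "co c m 0 (Nd v A l B r) = sum c B + LW c r"
| "co c m (Suc d) (Nd v A l B r) = sum c A + sum c B + co c m d l + co c m d r"

fun cc :: "('v set \<Rightarrow> real) \<Rightarrow> nat \<Rightarrow> nat \<Rightarrow> 'v bt \<Rightarrow> real" where
  "cc c m d (Lf v) = 0"
| "cc c m 0 (Nd v A l B r) = (sum c A + sum c B + co c m m l + co c m m r) + cc c m m l + cc c m m r"
| "cc c m (Suc d) (Nd v A l B r) = cc c m d l + cc c m d r"

fun cs :: "('v set \<Rightarrow> real) \<Rightarrow> nat \<Rightarrow> nat \<Rightarrow> 'v bt \<Rightarrow> real" where
  "cs c m d (Lf v) = 0"
| "cs c m 0 (Nd v A l B r) = sum c B + LW c r + cs c m m l + cs c m m r"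
| "cs c m (Suc d) (Nd v A l B r) = cs c m d l + cs c m d r"

lemma co_cc: "co c m d T + cc c m d T = Ct c T + cs c m d T"
proof (induction T arbitrary: d)
  case (Lf v) then show ?case by simp
next
  case (Nd v A l B r)
  then show ?case
  proof (cases d)
    case 0
    have "co c m m l + cc c m m l = Ct c l + cs c m m l" "co c m m r + cc c m m r = Ct c r + cs c m m r"
      using Nd.IH by auto
    then show ?thesis using 0 by simp
  next
    case (Suc d')
    have "co c m d' l + cc c m d' l = Ct c l + cs c m d' l" "co c m d' r + cc c m d' r = Ct c r + cs c m d' r"
      using Nd.IH by auto
    then show ?thesis using Suc by simp
  qed
qed

lemma sum_cs: "(\<Sum>i<Suc m. cs c m i T) = allP c T"
proof (induction T)
  case (Lf v) then show ?case by simp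
next
  case (Nd v A l B r)
  have "(\<Sum>i<Suc m. cs c m i (Nd v A l B r)) = cs c m 0 (Nd v A l B r) + (\<Sum>i<m. cs c m (Suc i) (Nd v A l B r))"
    by (rule sum.lessThan_Suc_shift)
  also have "\<dots> = sum c B + LW c r + cs c m m l + cs c m m r + (\<Sum>i<m. cs c m i l) + (\<Sum>i<m. cs c m i r)"
    by (simp add: sum.distrib)
  also have "\<dots> = sum c B + LW c r + (\<Sum>i<Suc m. cs c m i l) + (\<Sum>i<Suc m. cs c m i r)"
    by simp
  also have "\<dots> = allP c (Nd v A l B r)" using Nd by simp
  finally show ?case .
qed

lemma allP_le: "allP c T + LW c T \<le> Ct c T"
  by (induction T) auto

lemma LW_nonneg: "\<forall>x. 0 \<le> c x \<Longrightarrow> 0 \<le> LW c T"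
  by (induction T) (auto intro!: sum_nonneg add_nonneg_nonneg)

lemma Ct_nonneg: "\<forall>x. 0 \<le> c x \<Longrightarrow> 0 \<le> Ct c T"
  by (induction T) (auto intro!: sum_nonneg add_nonneg_nonneg)

lemma exists_le_avg:
  fixes f :: "nat \<Rightarrow> real"
  assumes "(\<Sum>i<n. f i) \<le> real n * x" "n > 0"
  shows "\<exists>i<n. f i \<le> x"
proof (rule ccontr)
  assume "\<not> ?thesis"
  then have "\<forall>i\<in>{..<n}. x < f i" by auto
  then have "(\<Sum>i<n. x) < (\<Sum>i<n. f i)"
    using assms(2) by (intro sum_strict_mono) auto
  then show False using assms(1) by simp
qed

lemma good_offset:
  assumes "\<forall>x. 0 \<le> c x"
  shows "\<exists>d<Suc m. co c m d T + cc c m d T \<le> (1 + 1 / real (Suc m)) * Ct c T"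
proof (rule exists_le_avg)
  have "(\<Sum>i<Suc m. co c m i T + cc c m i T) = (\<Sum>i<Suc m. Ct c T + cs c m i T)"
    by (simp add: co_cc)
  also have "\<dots> = real (Suc m) * Ct c T + allP c T"
    by (subst sum.distrib, subst sum_cs, simp)
  also have "\<dots> \<le> real (Suc m) * Ct c T + Ct c T"
    using allP_le[of c T] LW_nonneg[OF assms, of T] by simp
  also have "\<dots> = real (Suc m) * ((1 + 1 / real (Suc m)) * Ct c T)"
    by (simp add: field_simps)
  finally show "(\<Sum>i<Suc m. co c m i T + cc c m i T) \<le> real (Suc m) * ((1 + 1 / real (Suc m)) * Ct c T)" .
qed simp



lemma er_mono: "X \<subseteq> Y \<Longrightarrow> (a, b) \<in> (edge_rel X)\<^sup>* \<Longrightarrow> (a, b) \<in> (edge_rel Y)\<^sup>*"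
proof -
  assume "X \<subseteq> Y" "(a, b) \<in> (edge_rel X)\<^sup>*"
  moreover have "edge_rel X \<subseteq> edge_rel Y" using \<open>X \<subseteq> Y\<close> by (auto simp: edge_rel_def)
  ultimately show ?thesis using rtrancl_mono by blast
qed

lemma er_sym: "sym (edge_rel X)"
  by (auto simp: sym_def edge_rel_def insert_commute)

lemma er_symD: "(a, b) \<in> (edge_rel X)\<^sup>* \<Longrightarrow> (b, a) \<in> (edge_rel X)\<^sup>*"
  by (rule symD[OF sym_rtrancl[OF er_sym]])

lemma er_edge: "{a, b} \<in> X \<Longrightarrow> (a, b) \<in> (edge_rel X)\<^sup>*"
  by (auto simp: edge_rel_def)

lemma lm_in: "lm T \<in> lvs T"
  by (induction T) auto

lemma lm_conn: "wft T \<Longrightarrow> (lab T, lm T) \<in> (edge_rel (lmp T))\<^sup>*"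
proof (induction T)
  case (Lf v) then show ?case by simp
next
  case (Nd v A l B r)
  then have "(v, lab l) \<in> (edge_rel (A \<union> lmp l))\<^sup>*" "(lab l, lm l) \<in> (edge_rel (A \<union> lmp l))\<^sup>*"
    using er_mono[of A "A \<union> lmp l"] er_mono[of "lmp l" "A \<union> lmp l"] by auto
  then show ?case by simp
qed

lemma lmp_sub: "lmp T \<subseteq> ted T"
  by (induction T) auto

lemma opn_lvs: "fst (opn m d T) \<subseteq> lvs T"
proof (induction T arbitrary: d)
  case (Nd v A l B r) then show ?case using lm_in[of r] by (cases d) auto
qed simp

lemma cls_lvs: "\<forall>p\<in>set (cls m d T). fst p \<subseteq> lvs T"
proof (induction T arbitrary: d)
  case (Nd v A l B r)
  have "\<forall>p\<in>set (cls m d' l). fst p \<subseteq> lvs l" "\<forall>p\<in>set (cls m d' r). fst p \<subseteq> lvs r" for d'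
    using Nd.IH by auto
  then show ?case using opn_lvs[of m m l] opn_lvs[of m m r] by (cases d) fastforce+
qed simp

lemma lvs_cov: "lvs T \<subseteq> fst (opn m d T) \<union> \<Union> (fst ` set (cls m d T))"
proof (induction T arbitrary: d)
  case (Nd v A l B r)
  show ?case
  proof (cases d)
    case 0
    have "lvs l \<subseteq> fst (opn m m l) \<union> \<Union> (fst ` set (cls m m l))"
         "lvs r \<subseteq> fst (opn m m r) \<union> \<Union> (fst ` set (cls m m r))" using Nd.IH by auto
    then show ?thesis using 0 by auto
  next
    case (Suc d')
    have "lvs l \<subseteq> fst (opn m d' l) \<union> \<Union> (fst ` set (cls m d' l))"
         "lvs r \<subseteq> fst (opn m d' r) \<union> \<Union> (fst ` set (cls m d' r))" using Nd.IH by auto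
    then show ?thesis using Suc by auto
  qed
qed simp

lemma opn_card: "finite (fst (opn m d T)) \<and> card (fst (opn m d T)) \<le> 2 ^ d"
proof (induction T arbitrary: d)
  case (Nd v A l B r)
  show ?case
  proof (cases d)
    case 0 then show ?thesis by simp
  next
    case (Suc d')
    have h: "finite (fst (opn m d' l)) \<and> card (fst (opn m d' l)) \<le> 2 ^ d'"
            "finite (fst (opn m d' r)) \<and> card (fst (opn m d' r)) \<le> 2 ^ d'" using Nd.IH by auto
    have "card (fst (opn m d' l) \<union> fst (opn m d' r)) \<le> card (fst (opn m d' l)) + card (fst (opn m d' r))"
      by (rule card_Un_le)
    then show ?thesis using Suc h by simp
  qed
qed simp

lemma cls_card: "\<forall>p\<in>set (cls m d T). finite (fst p) \<and> card (fst p) \<le> 2 ^ Suc m"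
proof (induction T arbitrary: d)
  case (Nd v A l B r)
  show ?case
  proof (cases d)
    case 0
    have h: "finite (fst (opn m m l)) \<and> card (fst (opn m m l)) \<le> 2 ^ m"
            "finite (fst (opn m m r)) \<and> card (fst (opn m m r)) \<le> 2 ^ m" using opn_card by auto
    have "card (fst (opn m m l) \<union> fst (opn m m r)) \<le> card (fst (opn m m l)) + card (fst (opn m m r))"
      by (rule card_Un_le)
    then have "card (fst (opn m m l) \<union> fst (opn m m r)) \<le> 2 ^ Suc m" using h by simp
    then show ?thesis using 0 h Nd.IH by auto
  next
    case (Suc d') then show ?thesis using Nd.IH by auto
  qed
qed simp

lemma opn_conn: "wft T \<Longrightarrow> \<forall>t\<in>fst (opn m d T). (lab T, t) \<in> (edge_rel (snd (opn m d T)))\<^sup>*"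
proof (induction T arbitrary: d)
  case (Nd v A l B r)
  show ?case
  proof (cases d)
    case 0
    have "(v, lab r) \<in> (edge_rel (B \<union> lmp r))\<^sup>*" "(lab r, lm r) \<in> (edge_rel (B \<union> lmp r))\<^sup>*"
      using Nd.prems lm_conn[of r] er_mono[of B "B \<union> lmp r"] er_mono[of "lmp r" "B \<union> lmp r"] by auto
    then show ?thesis using 0 by simp
  next
    case (Suc d')
    let ?X = "A \<union> B \<union> snd (opn m d' l) \<union> snd (opn m d' r)"
    have a: "(v, lab l) \<in> (edge_rel ?X)\<^sup>*" "(v, lab r) \<in> (edge_rel ?X)\<^sup>*"
      using Nd.prems er_mono[of A ?X] er_mono[of B ?X] by auto
    have b: "\<forall>t\<in>fst (opn m d' l). (lab l, t) \<in> (edge_rel ?X)\<^sup>*"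
      using Nd.IH(1)[of d'] Nd.prems er_mono[of "snd (opn m d' l)" ?X] by auto
    have c: "\<forall>t\<in>fst (opn m d' r). (lab r, t) \<in> (edge_rel ?X)\<^sup>*"
      using Nd.IH(2)[of d'] Nd.prems er_mono[of "snd (opn m d' r)" ?X] by auto
    show ?thesis using Suc a b c by (auto intro: rtrancl_trans)
  qed
qed simp

lemma cls_conn: "wft T \<Longrightarrow> \<forall>p\<in>set (cls m d T). \<exists>a. \<forall>t\<in>fst p. (a, t) \<in> (edge_rel (snd p))\<^sup>*"
proof (induction T arbitrary: d)
  case (Nd v A l B r)
  show ?case
  proof (cases d)
    case 0
    let ?X = "A \<union> B \<union> snd (opn m m l) \<union> snd (opn m m r)"
    have a: "(v, lab l) \<in> (edge_rel ?X)\<^sup>*" "(v, lab r) \<in> (edge_rel ?X)\<^sup>*"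
      using Nd.prems er_mono[of A ?X] er_mono[of B ?X] by auto
    have b: "\<forall>t\<in>fst (opn m m l). (lab l, t) \<in> (edge_rel ?X)\<^sup>*"
      using opn_conn[of l m m] Nd.prems er_mono[of "snd (opn m m l)" ?X] by auto
    have c: "\<forall>t\<in>fst (opn m m r). (lab r, t) \<in> (edge_rel ?X)\<^sup>*"
      using opn_conn[of r m m] Nd.prems er_mono[of "snd (opn m m r)" ?X] by auto
    have "\<forall>t\<in>fst (opn m m l) \<union> fst (opn m m r). (v, t) \<in> (edge_rel ?X)\<^sup>*"
      using a b c by (auto intro: rtrancl_trans)
    moreover have "\<forall>p\<in>set (cls m m l). \<exists>a. \<forall>t\<in>fst p. (a, t) \<in> (edge_rel (snd p))\<^sup>*"
      "\<forall>p\<in>set (cls m m r). \<exists>a. \<forall>t\<in>fst p. (a, t) \<in> (edge_rel (snd p))\<^sup>*"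
      using Nd by auto
    ultimately show ?thesis using 0 by auto
  next
    case (Suc d')
    have "\<forall>p\<in>set (cls m d' l). \<exists>a. \<forall>t\<in>fst p. (a, t) \<in> (edge_rel (snd p))\<^sup>*"
      "\<forall>p\<in>set (cls m d' r). \<exists>a. \<forall>t\<in>fst p. (a, t) \<in> (edge_rel (snd p))\<^sup>*"
      using Nd by auto
    then show ?thesis using Suc by auto
  qed
qed simp

lemma opn_ted: "snd (opn m d T) \<subseteq> ted T"
proof (induction T arbitrary: d)
  case (Nd v A l B r) then show ?case using lmp_sub[of r] by (cases d) auto
qed simp

lemma cls_ted: "\<forall>p\<in>set (cls m d T). snd p \<subseteq> ted T"
proof (induction T arbitrary: d)
  case (Nd v A l B r)
  have "\<forall>p\<in>set (cls m d' l). snd p \<subseteq> ted l" "\<forall>p\<in>set (cls m d' r). snd p \<subseteq> ted r" for d'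
    using Nd.IH by auto
  then show ?case using opn_ted[of m m l] opn_ted[of m m r] by (cases d) fastforce+
qed simp

lemma sum_Un_le2:
  fixes c :: "'a \<Rightarrow> real"
  assumes "finite X" "finite Y" "\<forall>x. 0 \<le> c x"
  shows "sum c (X \<union> Y) \<le> sum c X + sum c Y"
  using sum_Un[OF assms(1,2), of c] sum_nonneg[of "X \<inter> Y" c] assms(3) by simp

lemma ted_fin: "finite (ted T) \<Longrightarrow> finite (lmp T)"
  using lmp_sub finite_subset by blast

lemma lmp_w: "\<forall>x. 0 \<le> c x \<Longrightarrow> finite (ted T) \<Longrightarrow> sum c (lmp T) \<le> LW c T"
proof (induction T)
  case (Nd v A l B r)
  have "sum c (A \<union> lmp l) \<le> sum c A + sum c (lmp l)"
    using Nd.prems lmp_sub[of l] finite_subset by (intro sum_Un_le2) auto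
  then show ?case using Nd by simp
qed simp

lemma opn_w: "\<forall>x. 0 \<le> c x \<Longrightarrow> finite (ted T) \<Longrightarrow> sum c (snd (opn m d T)) \<le> co c m d T"
proof (induction T arbitrary: d)
  case (Nd v A l B r)
  show ?case
  proof (cases d)
    case 0
    have "sum c (B \<union> lmp r) \<le> sum c B + sum c (lmp r)"
      using Nd.prems lmp_sub[of r] finite_subset by (intro sum_Un_le2) auto
    then show ?thesis using 0 lmp_w[of c r] Nd.prems by simp
  next
    case (Suc d')
    have f: "finite A" "finite B" "finite (snd (opn m d' l))" "finite (snd (opn m d' r))"
      using Nd.prems opn_ted[of m d' l] opn_ted[of m d' r] finite_subset by auto
    have "sum c (A \<union> B \<union> snd (opn m d' l) \<union> snd (opn m d' r))
       \<le> sum c (A \<union> B \<union> snd (opn m d' l)) + sum c (snd (opn m d' r))"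
      using f Nd.prems by (intro sum_Un_le2) auto
    also have "\<dots> \<le> sum c (A \<union> B) + sum c (snd (opn m d' l)) + sum c (snd (opn m d' r))"
      using f Nd.prems sum_Un_le2[of "A \<union> B" "snd (opn m d' l)" c] by auto
    also have "\<dots> \<le> sum c A + sum c B + sum c (snd (opn m d' l)) + sum c (snd (opn m d' r))"
      using f Nd.prems sum_Un_le2[of "A" "B" c] by auto
    also have "\<dots> \<le> sum c A + sum c B + co c m d' l + co c m d' r"
      using Nd.IH(1)[of d'] Nd.IH(2)[of d'] Nd.prems by simp
    finally show ?thesis using Suc by simp
  qed
qed simp

lemma cls_w: "\<forall>x. 0 \<le> c x \<Longrightarrow> finite (ted T) \<Longrightarrow> sum_list (map (\<lambda>p. sum c (snd p)) (cls m d T)) \<le> cc c m d T"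
proof (induction T arbitrary: d)
  case (Nd v A l B r)
  show ?case
  proof (cases d)
    case 0
    have f: "finite A" "finite B" "finite (snd (opn m m l))" "finite (snd (opn m m r))"
      using Nd.prems opn_ted[of m m l] opn_ted[of m m r] finite_subset by auto
    have "sum c (A \<union> B \<union> snd (opn m m l) \<union> snd (opn m m r))
       \<le> sum c (A \<union> B \<union> snd (opn m m l)) + sum c (snd (opn m m r))"
      using f Nd.prems by (intro sum_Un_le2) auto
    also have "\<dots> \<le> sum c (A \<union> B) + sum c (snd (opn m m l)) + sum c (snd (opn m m r))"
      using f Nd.prems sum_Un_le2[of "A \<union> B" "snd (opn m m l)" c] by auto
    also have "\<dots> \<le> sum c A + sum c B + sum c (snd (opn m m l)) + sum c (snd (opn m m r))"
      using f Nd.prems sum_Un_le2[of "A" "B" c] by auto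
    also have "\<dots> \<le> sum c A + sum c B + co c m m l + co c m m r"
      using opn_w[of c l m m] opn_w[of c r m m] Nd.prems by simp
    finally have h: "sum c (A \<union> B \<union> snd (opn m m l) \<union> snd (opn m m r)) \<le> sum c A + sum c B + co c m m l + co c m m r" .
    have "sum_list (map (\<lambda>p. sum c (snd p)) (cls m m l)) \<le> cc c m m l"
         "sum_list (map (\<lambda>p. sum c (snd p)) (cls m m r)) \<le> cc c m m r" using Nd by auto
    then show ?thesis using 0 h by simp
  next
    case (Suc d')
    have "sum_list (map (\<lambda>p. sum c (snd p)) (cls m d' l)) \<le> cc c m d' l"
         "sum_list (map (\<lambda>p. sum c (snd p)) (cls m d' r)) \<le> cc c m d' r" using Nd by auto
    then show ?thesis using Suc by simp
  qed
qed simp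

definition Rl :: "('v set \<times> 'v set set) list \<Rightarrow> ('v \<times> 'v) set" where
  "Rl L = {(u, v). \<exists>p\<in>set L. u \<in> fst p \<and> v \<in> fst p}"

lemma Rl_mono: "(\<forall>p\<in>set L1. \<exists>q\<in>set L2. fst p \<subseteq> fst q) \<Longrightarrow> (u, v) \<in> (Rl L1)\<^sup>* \<Longrightarrow> (u, v) \<in> (Rl L2)\<^sup>*"
proof -
  assume a: "\<forall>p\<in>set L1. \<exists>q\<in>set L2. fst p \<subseteq> fst q" "(u, v) \<in> (Rl L1)\<^sup>*"
  have "Rl L1 \<subseteq> Rl L2" using a(1) unfolding Rl_def by blast
  then show ?thesis using a(2) rtrancl_mono by blast
qed

lemma Rl_sym: "(u, v) \<in> (Rl L)\<^sup>* \<Longrightarrow> (v, u) \<in> (Rl L)\<^sup>*"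
proof -
  have "sym (Rl L)" by (auto simp: sym_def Rl_def)
  then show "(u, v) \<in> (Rl L)\<^sup>* \<Longrightarrow> (v, u) \<in> (Rl L)\<^sup>*" using sym_rtrancl by (auto dest: symD)
qed

lemma Rl_in: "p \<in> set L \<Longrightarrow> u \<in> fst p \<Longrightarrow> v \<in> fst p \<Longrightarrow> (u, v) \<in> (Rl L)\<^sup>*"
  by (auto simp: Rl_def)

lemma opn_ne: "fst (opn m d T) \<noteq> {}"
proof (induction T arbitrary: d)
  case (Nd v A l B r) then show ?case by (cases d) auto
qed simp

abbreviation Q where "Q m d T \<equiv> opn m d T # cls m d T"

lemma Q_conn: "\<forall>u\<in>\<Union>(fst ` set (Q m d T)). \<forall>v\<in>\<Union>(fst ` set (Q m d T)). (u, v) \<in> (Rl (Q m d T))\<^sup>*"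
proof (induction T arbitrary: d)
  case (Lf v) then show ?case by (auto simp: Rl_def)
next
  case (Nd v A l B r)
  show ?case
  proof (cases d)
    case 0
    let ?L = "Q m d (Nd v A l B r)"
    obtain a where a: "a \<in> fst (opn m m l)" using opn_ne[of m m l] by (meson all_not_in_conv)
    obtain b where b: "b \<in> fst (opn m m r)" using opn_ne[of m m r] by (meson all_not_in_conv)
    have sl: "\<forall>p\<in>set (Q m m l). \<exists>q\<in>set ?L. fst p \<subseteq> fst q" using 0 by auto
    have sr: "\<forall>p\<in>set (Q m m r). \<exists>q\<in>set ?L. fst p \<subseteq> fst q" using 0 by auto
    have ab: "(a, b) \<in> (Rl ?L)\<^sup>*" using 0 a b by (intro Rl_in[of "(fst (opn m m l) \<union> fst (opn m m r), A \<union> B \<union> snd (opn m m l) \<union> snd (opn m m r))"]) auto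
    have IHl: "\<forall>x\<in>\<Union>(fst ` set (Q m m l)). (a, x) \<in> (Rl ?L)\<^sup>*"
      using Nd.IH(1)[of m] a Rl_mono[OF sl] by auto
    have IHr: "\<forall>x\<in>\<Union>(fst ` set (Q m m r)). (b, x) \<in> (Rl ?L)\<^sup>*"
      using Nd.IH(2)[of m] b Rl_mono[OF sr] by auto
    have lmr: "lm r \<in> \<Union>(fst ` set (Q m m r))" using lvs_cov[of r m m] lm_in[of r] by auto
    have all: "\<forall>x\<in>\<Union>(fst ` set ?L). (a, x) \<in> (Rl ?L)\<^sup>*"
    proof
      fix x assume "x \<in> \<Union>(fst ` set ?L)"
      then have "x \<in> \<Union>(fst ` set (Q m m l)) \<or> x \<in> \<Union>(fst ` set (Q m m r))"
        using 0 lmr by auto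
      then show "(a, x) \<in> (Rl ?L)\<^sup>*" using IHl IHr ab by (auto intro: rtrancl_trans)
    qed
    show ?thesis using all Rl_sym 0 by (meson rtrancl_trans)
  next
    case (Suc d')
    let ?L = "Q m d (Nd v A l B r)"
    obtain a where a: "a \<in> fst (opn m d' l)" using opn_ne[of m d' l] by (meson all_not_in_conv)
    obtain b where b: "b \<in> fst (opn m d' r)" using opn_ne[of m d' r] by (meson all_not_in_conv)
    have sl: "\<forall>p\<in>set (Q m d' l). \<exists>q\<in>set ?L. fst p \<subseteq> fst q" using Suc by auto
    have sr: "\<forall>p\<in>set (Q m d' r). \<exists>q\<in>set ?L. fst p \<subseteq> fst q" using Suc by auto
    have ab: "(a, b) \<in> (Rl ?L)\<^sup>*" using Suc a b by (intro Rl_in[of "opn m d (Nd v A l B r)"]) auto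
    have IHl: "\<forall>x\<in>\<Union>(fst ` set (Q m d' l)). (a, x) \<in> (Rl ?L)\<^sup>*"
      using Nd.IH(1)[of d'] a Rl_mono[OF sl] by auto
    have IHr: "\<forall>x\<in>\<Union>(fst ` set (Q m d' r)). (b, x) \<in> (Rl ?L)\<^sup>*"
      using Nd.IH(2)[of d'] b Rl_mono[OF sr] by auto
    have all: "\<forall>x\<in>\<Union>(fst ` set ?L). (a, x) \<in> (Rl ?L)\<^sup>*"
    proof
      fix x assume "x \<in> \<Union>(fst ` set ?L)"
      then have "x \<in> \<Union>(fst ` set (Q m d' l)) \<or> x \<in> \<Union>(fst ` set (Q m d' r))"
        using Suc by auto
      then show "(a, x) \<in> (Rl ?L)\<^sup>*" using IHl IHr ab by (auto intro: rtrancl_trans)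
    qed
    show ?thesis using all Rl_sym Suc by (meson rtrancl_trans)
  qed
qed



lemma split_path:
  assumes "(r, s) \<in> (edge_rel F)\<^sup>*"
  shows "(r, s) \<in> (edge_rel (F - {{r, x}}))\<^sup>* \<or> (x, s) \<in> (edge_rel (F - {{r, x}}))\<^sup>*"
  using assms
proof (induction rule: rtrancl_induct)
  case base then show ?case by simp
next
  case (step y z)
  then have yz: "{y, z} \<in> F" by (simp add: edge_rel_def)
  show ?case
  proof (cases "{y, z} = {r, x}")
    case True
    then have "z = r \<or> z = x" by (metis doubleton_eq_iff)
    then show ?thesis by auto
  next
    case False
    then have "(y, z) \<in> edge_rel (F - {{r, x}})" using yz by (simp add: edge_rel_def)
    then show ?thesis using step.IH by (meson rtrancl_into_rtrancl)
  qed
qed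

lemma restrict_comp:
  assumes "(a, v) \<in> (edge_rel G)\<^sup>*"
  shows "(a, v) \<in> (edge_rel {f\<in>G. f \<noteq> {} \<and> (\<forall>u\<in>f. (a, u) \<in> (edge_rel G)\<^sup>*)})\<^sup>*"
  using assms
proof (induction rule: rtrancl_induct)
  case base then show ?case by simp
next
  case (step y z)
  then have yz: "{y, z} \<in> G" by (simp add: edge_rel_def)
  have "(a, z) \<in> (edge_rel G)\<^sup>*" using step by (meson rtrancl_into_rtrancl)
  then have "{y, z} \<in> {f\<in>G. f \<noteq> {} \<and> (\<forall>u\<in>f. (a, u) \<in> (edge_rel G)\<^sup>*)}"
    using yz step(1) by auto
  then have "(y, z) \<in> edge_rel {f\<in>G. f \<noteq> {} \<and> (\<forall>u\<in>f. (a, u) \<in> (edge_rel G)\<^sup>*)}"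
    by (simp add: edge_rel_def)
  then show ?case using step.IH by (meson rtrancl_into_rtrancl)
qed

lemma build:
  fixes c :: "'v set \<Rightarrow> real"
  assumes "finite F" "\<forall>x. 0 \<le> c x" "S \<noteq> {}" "\<forall>s\<in>S. (r, s) \<in> (edge_rel F)\<^sup>*"
  shows "\<exists>A T. wft T \<and> lvs T = S \<and> (r, lab T) \<in> (edge_rel A)\<^sup>* \<and> A \<union> ted T \<subseteq> F \<and>
               sum c A + Ct c T \<le> sum c F"
  using assms
proof (induction "card F" arbitrary: F S r rule: less_induct)
  case less
  note fin = less.prems(1) and cn = less.prems(2) and Sne = less.prems(3) and Sc = less.prems(4)
  show ?case
  proof (cases "S = {r}")
    case True
    show ?thesis
      by (rule exI[of _ "{}"], rule exI[of _ "Lf r"]) (use True cn in \<open>auto intro: sum_nonneg\<close>)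
  next
    case False
    then obtain s where s: "s \<in> S" "s \<noteq> r" using Sne by blast
    then have "(r, s) \<in> (edge_rel F)\<^sup>*" using Sc by auto
    then obtain x where "(r, x) \<in> edge_rel F" using s(2) by (metis converse_rtranclE)
    then have eF: "{r, x} \<in> F" by (simp add: edge_rel_def)
    define e where "e = {r, x}"
    define F' where "F' = F - {e}"
    have cardF': "card F' < card F" unfolding F'_def using eF fin e_def by (metis card_Diff1_less)
    have finF': "finite F'" using fin F'_def by simp
    have sp: "\<forall>s\<in>S. (r, s) \<in> (edge_rel F')\<^sup>* \<or> (x, s) \<in> (edge_rel F')\<^sup>*"
    proof
      fix s assume "s \<in> S"
      then have "(r, s) \<in> (edge_rel F)\<^sup>*" using Sc by auto
      then show "(r, s) \<in> (edge_rel F')\<^sup>* \<or> (x, s) \<in> (edge_rel F')\<^sup>*"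
        using split_path[of r s F x] unfolding F'_def e_def by simp
    qed
    show ?thesis
    proof (cases "(r, x) \<in> (edge_rel F')\<^sup>*")
      case True
      then have "\<forall>s\<in>S. (r, s) \<in> (edge_rel F')\<^sup>*" using sp by (meson rtrancl_trans)
      then obtain A T where AT: "wft T" "lvs T = S" "(r, lab T) \<in> (edge_rel A)\<^sup>*" "A \<union> ted T \<subseteq> F'"
          "sum c A + Ct c T \<le> sum c F'"
        using less.hyps[OF cardF' finF' cn Sne] by blast
      have "sum c F' \<le> sum c F" using fin cn unfolding F'_def by (intro sum_mono2) auto
      then show ?thesis using AT F'_def by (intro exI[of _ A] exI[of _ T]) auto
    next
      case False
      note nrx = False
      define Fr where "Fr = {f\<in>F'. f \<noteq> {} \<and> (\<forall>u\<in>f. (r, u) \<in> (edge_rel F')\<^sup>*)}"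
      define Fx where "Fx = {f\<in>F'. f \<noteq> {} \<and> (\<forall>u\<in>f. (x, u) \<in> (edge_rel F')\<^sup>*)}"
      define S1 where "S1 = {s\<in>S. (r, s) \<in> (edge_rel F')\<^sup>*}"
      define S2 where "S2 = {s\<in>S. (x, s) \<in> (edge_rel F')\<^sup>*}"
      have S12: "S = S1 \<union> S2" using sp S1_def S2_def by auto
      have disj: "Fr \<inter> Fx = {}"
      proof (rule ccontr)
        assume "Fr \<inter> Fx \<noteq> {}"
        then obtain f u where "f \<in> Fr" "f \<in> Fx" "u \<in> f" unfolding Fr_def by blast
        then have "(r, u) \<in> (edge_rel F')\<^sup>*" "(x, u) \<in> (edge_rel F')\<^sup>*" unfolding Fr_def Fx_def by auto
        then have "(r, x) \<in> (edge_rel F')\<^sup>*" using er_symD by (meson rtrancl_trans)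
        then show False using nrx by simp
      qed
      have FrF: "Fr \<subseteq> F'" "Fx \<subseteq> F'" unfolding Fr_def Fx_def by auto
      have eFrx: "e \<notin> Fr" "e \<notin> Fx" using FrF F'_def by auto
      have cFr: "card Fr < card F" "card Fx < card F"
        using FrF cardF' finF' by (meson card_mono le_less_trans)+
      have finFr: "finite Fr" "finite Fx" using FrF finF' finite_subset by auto
      have cost: "sum c Fr + c e + sum c Fx \<le> sum c F"
      proof -
        have "sum c (insert e (Fr \<union> Fx)) = c e + (sum c Fr + sum c Fx)"
          using finFr disj eFrx by (simp add: sum.union_disjoint)
        moreover have "sum c (insert e (Fr \<union> Fx)) \<le> sum c F"
          using fin cn FrF eF e_def F'_def by (intro sum_mono2) auto
        ultimately show ?thesis by simp
      qed
      have e_conn: "(r, x) \<in> (edge_rel (insert e X))\<^sup>*" for X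
        using er_edge[of r x "insert e X"] e_def by simp
      show ?thesis
      proof (cases "S2 = {}")
        case True
        then have "\<forall>s\<in>S. (r, s) \<in> (edge_rel Fr)\<^sup>*"
          using S12 S1_def restrict_comp[of r _ F'] Fr_def by auto
        then obtain A T where AT: "wft T" "lvs T = S" "(r, lab T) \<in> (edge_rel A)\<^sup>*" "A \<union> ted T \<subseteq> Fr"
            "sum c A + Ct c T \<le> sum c Fr"
          using less.hyps[OF cFr(1) finFr(1) cn Sne] by blast
        have "sum c Fr \<le> sum c F" using fin cn FrF F'_def by (intro sum_mono2) auto
        then show ?thesis using AT FrF F'_def by (intro exI[of _ A] exI[of _ T]) auto
      next
        case S2ne: False
        have S2c: "\<forall>s\<in>S2. (x, s) \<in> (edge_rel Fx)\<^sup>*"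
          using S2_def restrict_comp[of x _ F'] Fx_def by auto
        obtain A2 T2 where AT2: "wft T2" "lvs T2 = S2" "(x, lab T2) \<in> (edge_rel A2)\<^sup>*" "A2 \<union> ted T2 \<subseteq> Fx"
            "sum c A2 + Ct c T2 \<le> sum c Fx"
          using less.hyps[OF cFr(2) finFr(2) cn S2ne S2c] by blast
        have finA2: "finite A2" using AT2(4) finFr finite_subset by auto
        have cA2: "sum c (insert e A2) \<le> c e + sum c A2"
          using finA2 cn by (simp add: sum.insert_if)
        have rT2: "(r, lab T2) \<in> (edge_rel (insert e A2))\<^sup>*"
          using e_conn[of A2] er_mono[OF _ AT2(3), of "insert e A2"] by (meson rtrancl_trans subset_insertI)
        show ?thesis
        proof (cases "S1 = {}")
          case True
          then have "S = S2" using S12 by auto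
          moreover have "sum c (insert e A2) + Ct c T2 \<le> sum c F"
          proof -
            have "0 \<le> sum c Fr" using cn by (simp add: sum_nonneg)
            then show ?thesis using cA2 AT2(5) cost by linarith
          qed
          ultimately show ?thesis using AT2 rT2 FrF eF e_def F'_def
            by (intro exI[of _ "insert e A2"] exI[of _ T2]) auto
        next
          case S1ne: False
          have S1c: "\<forall>s\<in>S1. (r, s) \<in> (edge_rel Fr)\<^sup>*"
            using S1_def restrict_comp[of r _ F'] Fr_def by auto
          obtain A1 T1 where AT1: "wft T1" "lvs T1 = S1" "(r, lab T1) \<in> (edge_rel A1)\<^sup>*" "A1 \<union> ted T1 \<subseteq> Fr"
              "sum c A1 + Ct c T1 \<le> sum c Fr"
            using less.hyps[OF cFr(1) finFr(1) cn S1ne S1c] by blast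
          let ?T = "Nd r A1 T1 (insert e A2) T2"
          have "wft ?T" using AT1 AT2 rT2 by simp
          moreover have "lvs ?T = S" using AT1 AT2 S12 by simp
          moreover have "{} \<union> ted ?T \<subseteq> F"
          proof -
            have "Fr \<subseteq> F" "Fx \<subseteq> F" using FrF unfolding F'_def by auto
            then show ?thesis using AT1(4) AT2(4) eF unfolding e_def by auto
          qed
          moreover have "sum c {} + Ct c ?T \<le> sum c F"
            using cA2 AT2(5) AT1(5) cost by simp
          moreover have "(r, lab ?T) \<in> (edge_rel {})\<^sup>*" by simp
          ultimately show ?thesis by blast
        qed
      qed
    qed
  qed
qed



lemma comps_equiv: "equiv V {(u, v). u \<in> V \<and> v \<in> V \<and> (u, v) \<in> (edge_rel F)\<^sup>*}"
proof (rule equivI)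
  show "refl_on V {(u, v). u \<in> V \<and> v \<in> V \<and> (u, v) \<in> (edge_rel F)\<^sup>*}"
    unfolding refl_on_def by simp
  show "sym {(u, v). u \<in> V \<and> v \<in> V \<and> (u, v) \<in> (edge_rel F)\<^sup>*}"
    unfolding sym_def
  proof (intro allI impI)
    fix x y
    assume "(x, y) \<in> {(u, v). u \<in> V \<and> v \<in> V \<and> (u, v) \<in> (edge_rel F)\<^sup>*}"
    then have b: "x \<in> V" "y \<in> V" "(x, y) \<in> (edge_rel F)\<^sup>*" by auto
    have "(y, x) \<in> (edge_rel F)\<^sup>*" using b(3) by (rule er_symD)
    then show "(y, x) \<in> {(u, v). u \<in> V \<and> v \<in> V \<and> (u, v) \<in> (edge_rel F)\<^sup>*}" using b by simp
  qed
  show "trans {(u, v). u \<in> V \<and> v \<in> V \<and> (u, v) \<in> (edge_rel F)\<^sup>*}"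
    unfolding trans_def
  proof (intro allI impI)
    fix x y z
    assume a: "(x, y) \<in> {(u, v). u \<in> V \<and> v \<in> V \<and> (u, v) \<in> (edge_rel F)\<^sup>*}"
              "(y, z) \<in> {(u, v). u \<in> V \<and> v \<in> V \<and> (u, v) \<in> (edge_rel F)\<^sup>*}"
    then have b: "x \<in> V" "z \<in> V" "(x, y) \<in> (edge_rel F)\<^sup>*" "(y, z) \<in> (edge_rel F)\<^sup>*" by auto
    have "(x, z) \<in> (edge_rel F)\<^sup>*" using b(3,4) by (rule rtrancl_trans)
    then show "(x, z) \<in> {(u, v). u \<in> V \<and> v \<in> V \<and> (u, v) \<in> (edge_rel F)\<^sup>*}" using b by simp
  qed
qed auto

definition cR :: "'v set \<Rightarrow> 'v set set \<Rightarrow> ('v \<times> 'v) set" where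
  "cR V F = {(u, v). u \<in> V \<and> v \<in> V \<and> (u, v) \<in> (edge_rel F)\<^sup>*}"

lemma cR_equiv: "equiv V (cR V F)"
  unfolding cR_def by (rule comps_equiv)

lemma comps_cR: "comps V F = V // cR V F"
  unfolding comps_def cR_def by simp

lemma comps_conn:
  assumes "C \<in> comps V F" "u \<in> C" "v \<in> C"
  shows "(u, v) \<in> (edge_rel F)\<^sup>*"
proof -
  have C: "C \<in> V // cR V F" using assms(1) comps_cR by metis
  have "(u, v) \<in> cR V F" using quotient_eq_iff[OF cR_equiv C C assms(2,3)] by simp
  then show ?thesis unfolding cR_def by simp
qed

lemma comps_sub: "C \<in> comps V F \<Longrightarrow> C \<subseteq> V"
  using in_quotient_imp_subset[OF cR_equiv] comps_cR by metis

lemma comps_closed: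
  assumes "C \<in> comps V F" "u \<in> C" "v \<in> V" "(u, v) \<in> (edge_rel F)\<^sup>*"
  shows "v \<in> C"
proof -
  have C: "C \<in> V // cR V F" using assms(1) comps_cR by metis
  have "v \<in> \<Union>(V // cR V F)" using Union_quotient[OF cR_equiv, of V F] assms(3) by simp
  then obtain Y where Y: "Y \<in> V // cR V F" "v \<in> Y" by blast
  have "u \<in> V" using comps_sub assms(1,2) by blast
  then have "(u, v) \<in> cR V F" using assms(3,4) unfolding cR_def by simp
  then have "C = Y" using quotient_eq_iff[OF cR_equiv C Y(1) assms(2) Y(2)] by simp
  then show ?thesis using Y by simp
qed

lemma comps_disj:
  assumes "C1 \<in> comps V F" "C2 \<in> comps V F" "x \<in> C1" "x \<in> C2"
  shows "C1 = C2"
proof -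
  have C: "C1 \<in> V // cR V F" "C2 \<in> V // cR V F" using assms(1,2) comps_cR by metis+
  have "x \<in> V" using comps_sub assms(1,3) by blast
  then have "(x, x) \<in> cR V F" unfolding cR_def by simp
  then show ?thesis using quotient_eq_iff[OF cR_equiv C(1) C(2) assms(3) assms(4)] by simp
qed

lemma Fs_mono:
  assumes mr: "moat_run V E c D eps Fs Act" and "0 \<le> t0" "t0 \<le> t"
  shows "Fs t0 \<subseteq> Fs t"
proof -
  have dm: "dual Act S' t0 \<le> dual Act S' t" for S'
    unfolding dual_def
    using mr unfolding moat_run_def
    by (intro integral_subset_le) (use assms in auto)
  have "load V E Act e t0 \<le> load V E Act e t" for e
    unfolding load_def by (intro sum_mono dm)
  moreover have "Fs t0 = {e \<in> E. load V E Act e t0 \<ge> c e}" "Fs t = {e \<in> E. load V E Act e t \<ge> c e}"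
    using mr assms(2,3) unfolding moat_run_def by auto
  ultimately show ?thesis by (smt (verit) mem_Collect_eq subsetI)
qed

lemma deact_act:
  assumes "0 \<le> t" "ereal t < deact_time Act v"
  shows "\<exists>A\<in>Act t. v \<in> A"
proof -
  obtain t' where "t' \<in> {t. 0 \<le> t \<and> (\<forall>s. 0 \<le> s \<and> s < t \<longrightarrow> (\<exists>A\<in>Act s. v \<in> A))}" "ereal t < ereal t'"
    using assms(2) unfolding deact_time_def less_SUP_iff by blast
  then show ?thesis using assms(1) by auto
qed

lemma quot_eq:
  assumes mr: "moat_run V E c D eps Fs Act" and ac: "act_conn_set V Fs Act S"
    and sub: "\<forall>P\<in>Sk. P \<subseteq> S"
    and conn: "\<forall>u\<in>S. \<forall>v\<in>S. (u, v) \<in> {(a, b). \<exists>P\<in>Sk. a \<in> P \<and> b \<in> P}\<^sup>*"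
    and t: "0 \<le> t"
  shows "quot_fam (Act t) Sk = quot_fam (Act t) {S}"
proof -
  let ?A = "Act t"
  let ?R = "{(a, b). \<exists>P\<in>Sk. a \<in> P \<and> b \<in> P}"
  have Asub: "?A \<subseteq> comps V (Fs t)" using mr t unfolding moat_run_def by auto
  have M12: "merge_rel ?A Sk \<subseteq> merge_rel ?A {S}" using sub unfolding merge_rel_def by blast
  have M21: "merge_rel ?A {S} \<subseteq> (merge_rel ?A Sk)\<^sup>*"
  proof
    fix p assume "p \<in> merge_rel ?A {S}"
    then obtain X Y u v where p: "p = (X, Y)" "X \<in> ?A" "Y \<in> ?A" "u \<in> S" "u \<in> X" "v \<in> S" "v \<in> Y"
      unfolding merge_rel_def by blast
    show "p \<in> (merge_rel ?A Sk)\<^sup>*"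
    proof (cases "\<exists>z\<in>S. ereal t < deact_time Act z")
      case True
      then obtain z where z: "z \<in> S" "ereal t < deact_time Act z" by blast
      obtain Z where Z: "Z \<in> ?A" "z \<in> Z" using deact_act[OF t z(2)] by blast
      have act: "\<forall>w\<in>S. \<exists>W\<in>?A. w \<in> W"
      proof
        fix w assume w: "w \<in> S"
        have "act_conn V Fs Act z w" using ac z(1) w unfolding act_conn_set_def by blast
        then obtain t0 where t0: "0 \<le> t0" "\<exists>C\<in>comps V (Fs t0). z \<in> C \<and> w \<in> C"
            "ereal t0 \<le> deact_time Act z" "ereal t0 \<le> deact_time Act w"
          unfolding act_conn_def by blast
        then obtain C where C: "C \<in> comps V (Fs t0)" "z \<in> C" "w \<in> C" by blast
        have tc: "0 \<le> t0" "C \<in> comps V (Fs t0)" "z \<in> C" "w \<in> C"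
            "ereal t0 \<le> deact_time Act z" "ereal t0 \<le> deact_time Act w"
          using t0 C by auto
        show "\<exists>W\<in>?A. w \<in> W"
        proof (cases "t0 \<le> t")
          case True
          have zw0: "(z, w) \<in> (edge_rel (Fs t0))\<^sup>*" by (rule comps_conn[OF tc(2) tc(3) tc(4)])
          have zw: "(z, w) \<in> (edge_rel (Fs t))\<^sup>*" by (rule er_mono[OF Fs_mono[OF mr tc(1) True] zw0])
          have wV: "w \<in> V" using comps_sub[OF tc(2)] tc(4) by blast
          have ZC: "Z \<in> comps V (Fs t)" using Asub Z(1) by blast
          have "w \<in> Z" by (rule comps_closed[OF ZC Z(2) wV zw])
          then show ?thesis using Z by blast
        next
          case False
          then have "t < t0" by linarith
          then have "ereal t < ereal t0" by simp
          then have "ereal t < deact_time Act w" using tc(6) by (rule order_less_le_trans)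
          then show ?thesis by (rule deact_act[OF t])
        qed
      qed
      have key: "(u, w) \<in> ?R\<^sup>* \<Longrightarrow> \<forall>W\<in>?A. w \<in> W \<longrightarrow> (X, W) \<in> (merge_rel ?A Sk)\<^sup>*" for w
      proof (induction rule: rtrancl_induct)
        case base
        show ?case
        proof (intro ballI impI)
          fix W assume "W \<in> ?A" "u \<in> W"
          then have "W = X" using comps_disj[of W V "Fs t" X u] p Asub by blast
          then show "(X, W) \<in> (merge_rel ?A Sk)\<^sup>*" by simp
        qed
      next
        case (step y w')
        then obtain P where P: "P \<in> Sk" "y \<in> P" "w' \<in> P" by blast
        then have "y \<in> S" using sub by blast
        then obtain Y0 where Y0: "Y0 \<in> ?A" "y \<in> Y0" using act by blast
        have XY0: "(X, Y0) \<in> (merge_rel ?A Sk)\<^sup>*" using step.IH Y0 by blast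
        show ?case
        proof (intro ballI impI)
          fix W assume W: "W \<in> ?A" "w' \<in> W"
          have "(Y0, W) \<in> merge_rel ?A Sk" unfolding merge_rel_def using P Y0 W by blast
          then show "(X, W) \<in> (merge_rel ?A Sk)\<^sup>*" using XY0 by (meson rtrancl_into_rtrancl)
        qed
      qed
      have "(u, v) \<in> ?R\<^sup>*" using conn p(4) p(6) by blast
      then have "\<forall>W\<in>?A. v \<in> W \<longrightarrow> (X, W) \<in> (merge_rel ?A Sk)\<^sup>*" by (rule key)
      then show ?thesis using p(1) p(3) p(7) by simp
    next
      case False
      then have dz: "\<forall>z\<in>S. deact_time Act z \<le> ereal t" by (auto simp: not_less)
      from ac p obtain t0 C where tc: "0 \<le> t0" "C \<in> comps V (Fs t0)" "u \<in> C" "v \<in> C"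
          "ereal t0 \<le> deact_time Act u"
        unfolding act_conn_set_def act_conn_def by blast
      have "deact_time Act u \<le> ereal t" using dz p(4) by blast
      then have "ereal t0 \<le> ereal t" using tc(5) by (rule order_trans[rotated])
      then have t0t: "t0 \<le> t" by simp
      have "(u, v) \<in> (edge_rel (Fs t0))\<^sup>*" using comps_conn tc by metis
      then have "(u, v) \<in> (edge_rel (Fs t))\<^sup>*" using er_mono Fs_mono[OF mr tc(1) t0t] by metis
      moreover have "v \<in> V" using comps_sub tc by blast
      ultimately have "v \<in> X" using comps_closed[of X V "Fs t" u v] p Asub by blast
      then have "X = Y" using comps_disj[of X V "Fs t" Y v] p Asub by blast
      then show ?thesis using p by simp
    qed
  qed
  have "(merge_rel ?A Sk)\<^sup>* = (merge_rel ?A {S})\<^sup>*"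
    using rtrancl_mono[OF M12] rtrancl_subset_rtrancl[OF M21] by blast
  then show ?thesis unfolding quot_fam_def by simp
qed

lemma gain_eq:
  assumes mr: "moat_run V E c D eps Fs Act" and ac: "act_conn_set V Fs Act S"
    and sub: "\<forall>P\<in>Sk. P \<subseteq> S"
    and conn: "\<forall>u\<in>S. \<forall>v\<in>S. (u, v) \<in> {(a, b). \<exists>P\<in>Sk. a \<in> P \<and> b \<in> P}\<^sup>*"
  shows "gain Act Sk = gain Act {S}"
proof -
  have "integral {0..} (\<lambda>t. real (card (Act t)) - real (card (quot_fam (Act t) Sk)))
      = integral {0..} (\<lambda>t. real (card (Act t)) - real (card (quot_fam (Act t) {S})))"
    by (rule Henstock_Kurzweil_Integration.integral_cong) (simp add: quot_eq[OF mr ac sub conn])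
  then show ?thesis unfolding gain_def by simp
qed



lemma sum_set_le_list:
  fixes f :: "'a \<Rightarrow> real"
  assumes "\<forall>x\<in>set xs. 0 \<le> f x"
  shows "sum f (set xs) \<le> sum_list (map f xs)"
  using assms
proof (induction xs)
  case Nil then show ?case by simp
next
  case (Cons a xs)
  have "sum f (set (a # xs)) \<le> f a + sum f (set xs)"
  proof (cases "a \<in> set xs")
    case True
    then have "set (a # xs) = set xs" by auto
    moreover have "0 \<le> f a" using Cons.prems by simp
    ultimately show ?thesis by simp
  next
    case False then show ?thesis by simp
  qed
  then show ?case using Cons by simp
qed

definition conn_in :: "'v set set \<Rightarrow> 'v set \<Rightarrow> bool" where
  "conn_in F P \<longleftrightarrow> (\<forall>u\<in>P. \<forall>v\<in>P. (u, v) \<in> (edge_rel F)\<^sup>*)"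

lemma costset_fin: "finite E \<Longrightarrow> finite {sum c F | F. F \<subseteq> E \<and> (\<forall>u\<in>P. \<forall>v\<in>P. (u, v) \<in> (edge_rel F)\<^sup>*)}"
proof -
  assume "finite E"
  have "{sum c F | F. F \<subseteq> E \<and> (\<forall>u\<in>P. \<forall>v\<in>P. (u, v) \<in> (edge_rel F)\<^sup>*)} \<subseteq> sum c ` Pow E" by blast
  moreover have "finite (sum c ` Pow E)" using \<open>finite E\<close> by simp
  ultimately show ?thesis by (rule finite_subset)
qed

lemma costset_le:
  assumes "finite E" "F \<subseteq> E" "conn_in F P"
  shows "cost_set E c P \<le> sum c F"
  unfolding cost_set_def
  by (rule Min_le[OF costset_fin[OF assms(1)]]) (use assms(2,3) in \<open>auto simp: conn_in_def\<close>)

lemma costset_attain: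
  assumes "finite E" "conn_in E P"
  shows "\<exists>F. F \<subseteq> E \<and> conn_in F P \<and> sum c F = cost_set E c P"
proof -
  have ne: "{sum c F | F. F \<subseteq> E \<and> (\<forall>u\<in>P. \<forall>v\<in>P. (u, v) \<in> (edge_rel F)\<^sup>*)} \<noteq> {}"
    using assms(2) unfolding conn_in_def by blast
  have "cost_set E c P \<in> {sum c F | F. F \<subseteq> E \<and> (\<forall>u\<in>P. \<forall>v\<in>P. (u, v) \<in> (edge_rel F)\<^sup>*)}"
    unfolding cost_set_def by (rule Min_in[OF costset_fin[OF assms(1)] ne])
  then show ?thesis unfolding conn_in_def by auto
qed

lemma costset_nonneg:
  assumes "finite E" "conn_in E P" "\<forall>e\<in>E. 0 \<le> c e"
  shows "0 \<le> cost_set E c P"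
proof -
  obtain F where "F \<subseteq> E" "sum c F = cost_set E c P" using costset_attain[OF assms(1,2)] by blast
  moreover have "0 \<le> sum c F" using assms(3) \<open>F \<subseteq> E\<close> by (intro sum_nonneg) auto
  ultimately show ?thesis by simp
qed

lemma conn_from_root:
  assumes "\<forall>t\<in>P. (a, t) \<in> (edge_rel F)\<^sup>*"
  shows "conn_in F P"
  unfolding conn_in_def
proof (intro ballI)
  fix u v assume "u \<in> P" "v \<in> P"
  then have "(a, u) \<in> (edge_rel F)\<^sup>*" "(a, v) \<in> (edge_rel F)\<^sup>*" using assms by auto
  then have "(u, a) \<in> (edge_rel F)\<^sup>*" "(a, v) \<in> (edge_rel F)\<^sup>*" using er_symD by auto
  then show "(u, v) \<in> (edge_rel F)\<^sup>*" by (rule rtrancl_trans)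
qed

lemma conn_mono: "conn_in F P \<Longrightarrow> F \<subseteq> G \<Longrightarrow> conn_in G P"
  unfolding conn_in_def using er_mono[of F G] by simp

lemma log_facts:
  assumes "k \<ge> (2::nat)"
  shows "\<exists>m. real_of_int \<lfloor>log 2 (real k)\<rfloor> = real (Suc m) \<and> 2 ^ Suc m \<le> k"
proof -
  have "log 2 2 \<le> log 2 (real k)" using assms by simp
  then have l1: "1 \<le> log 2 (real k)" by simp
  then have f1: "1 \<le> \<lfloor>log 2 (real k)\<rfloor>" by linarith
  define rr where "rr = nat \<lfloor>log 2 (real k)\<rfloor>"
  have rr: "real_of_int \<lfloor>log 2 (real k)\<rfloor> = real rr" using f1 rr_def by simp
  have "rr \<ge> 1" using f1 rr_def by linarith
  then obtain m where m: "rr = Suc m" using not0_implies_Suc by fastforce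
  have "real rr \<le> log 2 (real k)" using rr by linarith
  then have "(2::real) powr real rr \<le> 2 powr (log 2 (real k))" by (intro powr_mono) auto
  also have "\<dots> = real k" using assms by simp
  finally have "(2::real) ^ rr \<le> real k" by (simp add: powr_realpow)
  then have "2 ^ rr \<le> k" by (metis of_nat_le_iff of_nat_numeral of_nat_power)
  then show ?thesis using rr m by blast
qed



theorem lemma3p8:
  fixes V :: "'v set" and E :: "'v set set" and c :: "'v set \<Rightarrow> real"
    and D :: "'v set set" and eps :: real
    and Fs Act :: "real \<Rightarrow> 'v set set" and k :: nat and S :: "'v set"
  assumes "finite V"
    and "\<forall>e\<in>E. \<exists>u v. e = {u, v} \<and> u \<noteq> v \<and> u \<in> V \<and> v \<in> V"
    and "\<forall>e\<in>E. c e \<ge> 0"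
    and "\<forall>d\<in>D. \<exists>a b. d = {a, b} \<and> a \<in> V \<and> b \<in> V"
    and "\<forall>d\<in>D. \<forall>a\<in>d. \<forall>b\<in>d. (a, b) \<in> (edge_rel E)\<^sup>*"
    and "eps \<ge> 0"
    and "moat_run V E c D eps Fs Act"
    and "k \<ge> 2"
    and "act_conn_set V Fs Act S"
  shows "\<exists>Sk. (\<forall>T\<in>Sk. T \<subseteq> S \<and> card T \<le> k) \<and>
              cost_coll E c Sk \<le> (1 + 1 / real_of_int \<lfloor>log 2 (real k)\<rfloor>) * cost_set E c S \<and>
              gain Act Sk = gain Act {S}"
proof -
  note mr = assms(7) and ac = assms(9) and cnn = assms(3)
  have "E \<subseteq> Pow V"
  proof
    fix e assume "e \<in> E"
    then obtain u v where "e = {u, v}" "u \<in> V" "v \<in> V" using assms(2) by blast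
    then show "e \<in> Pow V" by simp
  qed
  moreover have "finite (Pow V)" using assms(1) by simp
  ultimately have finE: "finite E" by (rule finite_subset)
  obtain m where m: "real_of_int \<lfloor>log 2 (real k)\<rfloor> = real (Suc m)" "2 ^ Suc m \<le> k"
    using log_facts[OF assms(8)] by auto
  have FsE: "Fs t \<subseteq> E" if "0 \<le> t" for t
  proof -
    have "Fs t = {e \<in> E. load V E Act e t \<ge> c e}" using mr that unfolding moat_run_def by blast
    then show ?thesis by blast
  qed
  have connS: "conn_in E S"
    unfolding conn_in_def
  proof (intro ballI)
    fix u v assume uv: "u \<in> S" "v \<in> S"
    have "act_conn V Fs Act u v" using ac uv unfolding act_conn_set_def by blast
    then obtain t0 where t0: "0 \<le> t0" "\<exists>C\<in>comps V (Fs t0). u \<in> C \<and> v \<in> C"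
      unfolding act_conn_def by blast
    then obtain C where C: "C \<in> comps V (Fs t0)" "u \<in> C" "v \<in> C" by blast
    have "(u, v) \<in> (edge_rel (Fs t0))\<^sup>*" by (rule comps_conn[OF C])
    then show "(u, v) \<in> (edge_rel E)\<^sup>*" by (rule er_mono[OF FsE[OF t0(1)]])
  qed
  have fpos: "0 < 1 + 1 / real_of_int \<lfloor>log 2 (real k)\<rfloor>"
    unfolding m(1)
  proof -
    have "0 < 1 / real (Suc m)" by simp
    then show "0 < 1 + 1 / real (Suc m)" by linarith
  qed
  show ?thesis
  proof (cases "S = {}")
    case True
    have "cost_coll E c {} = 0" unfolding cost_coll_def by simp
    moreover have "0 \<le> cost_set E c S" by (rule costset_nonneg[OF finE connS cnn])
    moreover have "gain Act {} = gain Act {S}"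
      by (rule gain_eq[OF mr ac]) (use True in auto)
    ultimately show ?thesis using fpos by (intro exI[of _ "{}"]) simp
  next
    case False
    then obtain r0 where r0: "r0 \<in> S" by blast
    obtain F0 where F0: "F0 \<subseteq> E" "conn_in F0 S" "sum c F0 = cost_set E c S"
      using costset_attain[OF finE connS] by blast
    define c' where "c' = (\<lambda>e. if e \<in> E then c e else 0)"
    have c'nn: "\<forall>x. 0 \<le> c' x" using cnn unfolding c'_def by simp
    have c'eq: "sum c' X = sum c X" if "X \<subseteq> E" for X
      using that unfolding c'_def by (intro sum.cong) auto
    have finF0: "finite F0" using F0(1) finE by (rule finite_subset)
    have r0c: "\<forall>s\<in>S. (r0, s) \<in> (edge_rel F0)\<^sup>*" using F0(2) r0 unfolding conn_in_def by blast
    obtain A T where AT: "wft T" "lvs T = S" "(r0, lab T) \<in> (edge_rel A)\<^sup>*" "A \<union> ted T \<subseteq> F0"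
        "sum c' A + Ct c' T \<le> sum c' F0"
      using build[OF finF0 c'nn False r0c] by blast
    have tedE: "ted T \<subseteq> E" using AT(4) F0(1) by blast
    have finT: "finite (ted T)" using tedE finE by (rule finite_subset)
    obtain d where d: "d < Suc m" "co c' m d T + cc c' m d T \<le> (1 + 1 / real (Suc m)) * Ct c' T"
      using good_offset[OF c'nn, of m T] by blast
    define L where "L = Q m d T"
    define Sk where "Sk = fst ` set L"
    have pieces_sub: "\<forall>p\<in>set L. fst p \<subseteq> S"
      using opn_lvs[of m d T] cls_lvs[of m d T] AT(2) unfolding L_def by auto
    have pieces_ted: "\<forall>p\<in>set L. snd p \<subseteq> ted T"
      using opn_ted[of m d T] cls_ted[of m d T] unfolding L_def by auto
    have pieces_conn: "\<forall>p\<in>set L. \<exists>a. \<forall>t\<in>fst p. (a, t) \<in> (edge_rel (snd p))\<^sup>*"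
      using opn_conn[OF AT(1), of m d] cls_conn[OF AT(1), of m d] unfolding L_def by auto
    have dle: "2 ^ d \<le> (2::nat) ^ Suc m" using d(1) by (intro power_increasing) auto
    have pieces_card: "card (fst p) \<le> k" if p: "p \<in> set L" for p
    proof -
      have "p = opn m d T \<or> p \<in> set (cls m d T)" using p unfolding L_def by simp
      then have "card (fst p) \<le> 2 ^ Suc m"
      proof
        assume "p = opn m d T"
        then show ?thesis using opn_card[of m d T] dle by simp
      next
        assume "p \<in> set (cls m d T)"
        then show ?thesis using cls_card[of m d T] by blast
      qed
      then show ?thesis using m(2) by linarith
    qed
    have P1: "\<forall>P\<in>Sk. P \<subseteq> S \<and> card P \<le> k"
    proof
      fix P assume "P \<in> Sk"
      then obtain p where "p \<in> set L" "P = fst p" unfolding Sk_def by blast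
      then show "P \<subseteq> S \<and> card P \<le> k" using pieces_sub pieces_card by blast
    qed
    have cs_nn: "\<forall>p\<in>set L. 0 \<le> cost_set E c (fst p)"
    proof
      fix p assume p: "p \<in> set L"
      then have sub: "fst p \<subseteq> S" using pieces_sub by blast
      have "conn_in E (fst p)" using connS sub unfolding conn_in_def by blast
      then show "0 \<le> cost_set E c (fst p)" by (rule costset_nonneg[OF finE _ cnn])
    qed
    have cs_le: "cost_set E c (fst p) \<le> sum c' (snd p)" if pL: "p \<in> set L" for p
    proof -
      have st: "snd p \<subseteq> ted T" by (rule bspec[OF pieces_ted pL])
      have sE: "snd p \<subseteq> E" using st tedE by (rule order_trans)
      obtain a where a: "\<forall>t\<in>fst p. (a, t) \<in> (edge_rel (snd p))\<^sup>*"
        using bspec[OF pieces_conn pL] by (rule exE)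
      have cn: "conn_in (snd p) (fst p)" using a by (rule conn_from_root)
      have h1: "cost_set E c (fst p) \<le> sum c (snd p)" by (rule costset_le[OF finE sE cn])
      have h2: "sum c' (snd p) = sum c (snd p)" by (rule c'eq[OF sE])
      show ?thesis using h1 h2 by linarith
    qed
    have "cost_coll E c Sk = sum (cost_set E c) (fst ` set L)" unfolding cost_coll_def Sk_def by simp
    also have "\<dots> \<le> sum (cost_set E c \<circ> fst) (set L)"
      by (rule sum_image_le) (use cs_nn in auto)
    also have "\<dots> \<le> sum_list (map (cost_set E c \<circ> fst) L)"
      by (rule sum_set_le_list) (use cs_nn in auto)
    also have "\<dots> \<le> sum_list (map (\<lambda>p. sum c' (snd p)) L)"
      by (rule sum_list_mono) (use cs_le in auto)
    also have "\<dots> = sum c' (snd (opn m d T)) + sum_list (map (\<lambda>p. sum c' (snd p)) (cls m d T))"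
      unfolding L_def by simp
    also have "\<dots> \<le> co c' m d T + cc c' m d T"
      using opn_w[OF c'nn finT, of m d] cls_w[OF c'nn finT, of m d] by linarith
    also have "\<dots> \<le> (1 + 1 / real (Suc m)) * Ct c' T" by (rule d(2))
    also have "\<dots> \<le> (1 + 1 / real (Suc m)) * sum c' F0"
    proof -
      have "0 \<le> sum c' A" using c'nn by (simp add: sum_nonneg)
      then have "Ct c' T \<le> sum c' F0" using AT(5) by linarith
      then show ?thesis by (intro mult_left_mono) auto
    qed
    also have "\<dots> = (1 + 1 / real_of_int \<lfloor>log 2 (real k)\<rfloor>) * cost_set E c S"
      using m(1) c'eq[OF F0(1)] F0(3) by simp
    finally have P2: "cost_coll E c Sk \<le> (1 + 1 / real_of_int \<lfloor>log 2 (real k)\<rfloor>) * cost_set E c S" .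
    have cov: "S \<subseteq> \<Union>(fst ` set L)"
      using lvs_cov[of T m d] AT(2) unfolding L_def by simp
    have RR: "Rl L = {(a, b). \<exists>P\<in>Sk. a \<in> P \<and> b \<in> P}" unfolding Rl_def Sk_def by auto
    have connR: "\<forall>u\<in>S. \<forall>v\<in>S. (u, v) \<in> {(a, b). \<exists>P\<in>Sk. a \<in> P \<and> b \<in> P}\<^sup>*"
    proof (intro ballI)
      fix u v assume "u \<in> S" "v \<in> S"
      then have "u \<in> \<Union>(fst ` set L)" "v \<in> \<Union>(fst ` set L)" using cov by auto
      then have "(u, v) \<in> (Rl L)\<^sup>*" using Q_conn[of m d T] unfolding L_def by blast
      then show "(u, v) \<in> {(a, b). \<exists>P\<in>Sk. a \<in> P \<and> b \<in> P}\<^sup>*" using RR by simp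
    qed
    have P3: "gain Act Sk = gain Act {S}"
      by (rule gain_eq[OF mr ac]) (use P1 connR in auto)
    show ?thesis using P1 P2 P3 by blast
  qed
qed


end
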